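(* Let the finite algebra be $M_{N_i}(\mathbb{C}) \oplus M_{N_j}(\mathbb{C})$ and let the finite Hilbert space of a real, even finite spectral triple of KO-dimension $6$ consist of two building blocks $\mathcal{B}_i$ and $\mathcal{B}_j$ of the first type (i.e. two copies $M_{N_i}(\mathbb{C})_L\oplus M_{N_i}(\mathbb{C})_R$ and $M_{N_j}(\mathbb{C})_L\oplus M_{N_j}(\mathbb{C})_R$ of the adjoint representations, with opposite grading), together with the representation $\mathbf{N}_i\otimes\mathbf{N}_j^o$ (grading $+$) and its conjugate $\mathbf{N}_j\otimes\mathbf{N}_i^o$ (grading $-$). Then on the basis $$\mathbf{N}_i\otimes\mathbf{N}_j^o \oplus M_{N_i}(\mathbb{C})_L \oplus M_{N_i}(\mathbb{C})_R \oplus M_{N_j}(\mathbb{C})_L \oplus M_{N_j}(\mathbb{C})_R \oplus \mathbf{N}_j\otimes\mathbf{N}_i^o$$ the most general finite Dirac operator is $$D_F = \begin{pmatrix} 0 & 0 & A & 0 & B & 0\\ 0 & 0 & M_i & 0 & 0 & JA^*J^*\\ A^* & M_i^* & 0 & 0 & 0 & 0\\ 0 & 0 & 0 & 0 & M_j & JB^*J^*\\ B^* & 0 & 0 & M_j^* & 0 & 0\\ 0 & JAJ^* & 0 & JBJ^* & 0 & 0 \end{pmatrix}$$ with $A : M_{N_i}(\mathbb{C})_R \to \mathbf{N}_i\otimes\mathbf{N}_j^o$ and $B : M_{N_j}(\mathbb{C})_R \to \mathbf{N}_i\otimes\mathbf{N}_j^o$, and $M_i$, $M_j$ maps between the two copies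 of the respective adjoint representations.
   Context: $D_F$ is required to be self-adjoint, to anticommute with the grading $\gamma_F$, to commute with the real structure $J_F$ (which interchanges the $L$ and $R$ copies while taking adjoints, $J_F(m,n)=(n^*,m^* )$, and maps $\mathbf{N}_i\otimes\mathbf{N}_j^o$ to its conjugate), and to satisfy the first-order condition $[[D_F,a],Jb J^{-1}]=0$ for all $a,b$ in the algebra. *)

theory Defs
  imports Complex_Main
begin

text \<open>Complex matrices indexed by finite types: an 'a x 'b matrix is a function
  'a => 'b => complex. N_i = CARD('i), N_j = CARD('j).\<close>

type_synonym ('a,'b) cmat = "'a \<Rightarrow> 'b \<Rightarrow> complex"

definition madd :: "('a,'b) cmat \<Rightarrow> ('a,'b) cmat \<Rightarrow> ('a,'b) cmat" where
  "madd x y = (\<lambda>r s. x r s + y r s)"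

definition msc :: "complex \<Rightarrow> ('a,'b) cmat \<Rightarrow> ('a,'b) cmat" where
  "msc c x = (\<lambda>r s. c * x r s)"

definition mzero :: "('a,'b) cmat" where
  "mzero = (\<lambda>r s. 0)"

definition mmul :: "('a,'b::finite) cmat \<Rightarrow> ('b,'c) cmat \<Rightarrow> ('a,'c) cmat" where
  "mmul x y = (\<lambda>r t. \<Sum>s\<in>UNIV. x r s * y s t)"

definition madj :: "('a,'b) cmat \<Rightarrow> ('b,'a) cmat" where
  "madj x = (\<lambda>r s. cnj (x s r))"

definition hs :: "('a::finite,'b::finite) cmat \<Rightarrow> ('a,'b) cmat \<Rightarrow> complex" where
  "hs x y = (\<Sum>r\<in>UNIV. \<Sum>s\<in>UNIV. cnj (x r s) * y r s)"

definition is_adjoint ::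
  "(('a::finite,'b::finite) cmat \<Rightarrow> ('c::finite,'d::finite) cmat) \<Rightarrow> (('c,'d) cmat \<Rightarrow> ('a,'b) cmat) \<Rightarrow> bool" where
  "is_adjoint T S \<longleftrightarrow> (\<forall>x y. hs (T x) y = hs x (S y))"

text \<open>The finite Hilbert space
  N_i (x) N_j^o  +  M_{N_i}(C)_L + M_{N_i}(C)_R + M_{N_j}(C)_L + M_{N_j}(C)_R + N_j (x) N_i^o,
  in this order.\<close>

datatype ('i,'j) hilb =
  H (cij: "('i,'j) cmat") (ciL: "('i,'i) cmat") (ciR: "('i,'i) cmat")
    (cjL: "('j,'j) cmat") (cjR: "('j,'j) cmat") (cji: "('j,'i) cmat")

definition hadd :: "('i,'j) hilb \<Rightarrow> ('i,'j) hilb \<Rightarrow> ('i,'j) hilb" where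
  "hadd x y = H (madd (cij x) (cij y)) (madd (ciL x) (ciL y)) (madd (ciR x) (ciR y))
                (madd (cjL x) (cjL y)) (madd (cjR x) (cjR y)) (madd (cji x) (cji y))"

definition hscale :: "complex \<Rightarrow> ('i,'j) hilb \<Rightarrow> ('i,'j) hilb" where
  "hscale c x = H (msc c (cij x)) (msc c (ciL x)) (msc c (ciR x))
                  (msc c (cjL x)) (msc c (cjR x)) (msc c (cji x))"

definition hsub :: "('i,'j) hilb \<Rightarrow> ('i,'j) hilb \<Rightarrow> ('i,'j) hilb" where
  "hsub x y = hadd x (hscale (-1) y)"

definition hzero :: "('i,'j) hilb" where
  "hzero = H mzero mzero mzero mzero mzero mzero"

definition hinner :: "('i::finite,'j::finite) hilb \<Rightarrow> ('i,'j) hilb \<Rightarrow> complex" where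
  "hinner x y = hs (cij x) (cij y) + hs (ciL x) (ciL y) + hs (ciR x) (ciR y)
              + hs (cjL x) (cjL y) + hs (cjR x) (cjR y) + hs (cji x) (cji y)"

definition rep :: "('i::finite,'i) cmat \<times> ('j::finite,'j) cmat \<Rightarrow> ('i,'j) hilb \<Rightarrow> ('i,'j) hilb" where
  "rep ab x = (case ab of (a,b) \<Rightarrow>
     H (mmul a (cij x)) (mmul a (ciL x)) (mmul a (ciR x))
       (mmul b (cjL x)) (mmul b (cjR x)) (mmul b (cji x)))"

text \<open>Real structure: J(m,n) = (n^*,m^*) on each adjoint building block, and
  N_i (x) N_j^o <-> N_j (x) N_i^o via m |-> m^*.  J^2 = 1, so J^{-1} = J^* = J.\<close>
definition Jop :: "('i,'j) hilb \<Rightarrow> ('i,'j) hilb" where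
  "Jop x = H (madj (cji x)) (madj (ciR x)) (madj (ciL x))
             (madj (cjR x)) (madj (cjL x)) (madj (cij x))"

definition gam :: "('i,'j) hilb \<Rightarrow> ('i,'j) hilb" where
  "gam x = H (cij x) (ciL x) (msc (-1) (ciR x)) (cjL x) (msc (-1) (cjR x)) (msc (-1) (cji x))"

definition comm :: "(('i,'j) hilb \<Rightarrow> ('i,'j) hilb) \<Rightarrow> (('i,'j) hilb \<Rightarrow> ('i,'j) hilb)
                    \<Rightarrow> ('i,'j) hilb \<Rightarrow> ('i,'j) hilb" where
  "comm S T = (\<lambda>x. hsub (S (T x)) (T (S x)))"

definition is_linear_op :: "(('i,'j) hilb \<Rightarrow> ('i,'j) hilb) \<Rightarrow> bool" where
  "is_linear_op D \<longleftrightarrow> (\<forall>x y. D (hadd x y) = hadd (D x) (D y)) \<and> (\<forall>c x. D (hscale c x) = hscale c (D x))"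

definition finite_dirac :: "(('i::finite,'j::finite) hilb \<Rightarrow> ('i,'j) hilb) \<Rightarrow> bool" where
  "finite_dirac D \<longleftrightarrow>
     is_linear_op D
   \<and> (\<forall>x y. hinner (D x) y = hinner x (D y))
   \<and> (\<forall>x. hadd (D (gam x)) (gam (D x)) = hzero)
   \<and> (\<forall>x. D (Jop x) = Jop (D x))
   \<and> (\<forall>a b x. comm (comm D (rep a)) (\<lambda>y. Jop (rep b (Jop y))) x = hzero)"

end

theory Submission
  imports Defs
begin

definition E1 :: "('i,'j) cmat \<Rightarrow> ('i,'j) hilb" where "E1 m = H m mzero mzero mzero mzero mzero"
definition E2 :: "('i,'i) cmat \<Rightarrow> ('i,'j) hilb" where "E2 m = H mzero m mzero mzero mzero mzero"
definition E3 :: "('i,'i) cmat \<Rightarrow> ('i,'j) hilb" where "E3 m = H mzero mzero m mzero mzero mzero"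
definition E4 :: "('j,'j) cmat \<Rightarrow> ('i,'j) hilb" where "E4 m = H mzero mzero mzero m mzero mzero"
definition E5 :: "('j,'j) cmat \<Rightarrow> ('i,'j) hilb" where "E5 m = H mzero mzero mzero mzero m mzero"
definition E6 :: "('j,'i) cmat \<Rightarrow> ('i,'j) hilb" where "E6 m = H mzero mzero mzero mzero mzero m"

definition Idm :: "('a,'a) cmat" where "Idm = (\<lambda>r s. if r = s then 1 else 0)"

lemmas Edefs = E1_def E2_def E3_def E4_def E5_def E6_def

lemma decomp: "x = hadd (E1 (cij x)) (hadd (E2 (ciL x)) (hadd (E3 (ciR x)) (hadd (E4 (cjL x)) (hadd (E5 (cjR x)) (E6 (cji x))))))"
  by (cases x) (simp add: hadd_def Edefs madd_def mzero_def)

lemma mmul_Id[simp]: "mmul Idm (m::('a::finite,'b) cmat) = m"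
  proof -
  have "\<And>r t. (\<Sum>s\<in>UNIV. (if r = s then 1 else 0) * m s t) = m r t"
  proof -
    fix r t
    have "(\<Sum>s\<in>UNIV. (if r = s then 1 else 0) * m s t) = (\<Sum>s\<in>UNIV. if r = s then m s t else 0)"
      by (rule sum.cong) auto
    also have "... = m r t" by simp
    finally show "(\<Sum>s\<in>UNIV. (if r = s then 1 else 0) * m s t) = m r t" .
  qed
  then show ?thesis by (simp add: mmul_def Idm_def fun_eq_iff)
qed

lemma mmul_0[simp]: "mmul mzero (m::('a::finite,'b) cmat) = mzero"
  by (simp add: mmul_def mzero_def fun_eq_iff)

lemma mmul_0'[simp]: "mmul (m::('a,'b::finite) cmat) mzero = mzero"
  by (simp add: mmul_def mzero_def fun_eq_iff)

lemma madj_0[simp]: "madj mzero = mzero" by (simp add: madj_def mzero_def fun_eq_iff)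
lemma madj_madj[simp]: "madj (madj m) = m" by (simp add: madj_def fun_eq_iff)
lemma msc_0[simp]: "msc c mzero = mzero" by (simp add: msc_def mzero_def fun_eq_iff)
lemma madd_0[simp]: "madd m mzero = m" "madd mzero m = m" by (simp_all add: madd_def mzero_def fun_eq_iff)
lemma hs_0[simp]: "hs mzero m = 0" "hs m mzero = 0" by (simp_all add: hs_def mzero_def)

lemma Jop_E[simp]:
  "Jop (E1 m) = E6 (madj m)" "Jop (E2 n) = E3 (madj n)" "Jop (E3 n) = E2 (madj n)"
  "Jop (E4 k) = E5 (madj k)" "Jop (E5 k) = E4 (madj k)" "Jop (E6 p) = E1 (madj p)"
  by (simp_all add: Jop_def Edefs)

lemma gam_E[simp]:
  "gam (E1 m) = E1 m" "gam (E2 n) = E2 n" "gam (E4 k) = E4 k"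
  "gam (E3 n) = hscale (-1) (E3 n)" "gam (E5 k) = hscale (-1) (E5 k)" "gam (E6 p) = hscale (-1) (E6 p)"
  by (simp_all add: gam_def Edefs hscale_def)

lemma rep_E[simp]:
  "rep (a,b) (E1 m) = E1 (mmul a m)" "rep (a,b) (E2 n) = E2 (mmul a n)" "rep (a,b) (E3 n) = E3 (mmul a n)"
  "rep (a,b) (E4 k) = E4 (mmul b k)" "rep (a,b) (E5 k) = E5 (mmul b k)" "rep (a,b) (E6 p) = E6 (mmul b p)"
  by (simp_all add: rep_def Edefs)

lemma E_zero[simp]:
  "E1 mzero = hzero" "E2 mzero = hzero" "E3 mzero = hzero" "E4 mzero = hzero" "E5 mzero = hzero" "E6 mzero = hzero"
  by (simp_all add: Edefs hzero_def)

lemma rep_c[simp]: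
  "cij (rep (a,b) y) = mmul a (cij y)" "ciL (rep (a,b) y) = mmul a (ciL y)" "ciR (rep (a,b) y) = mmul a (ciR y)"
  "cjL (rep (a,b) y) = mmul b (cjL y)" "cjR (rep (a,b) y) = mmul b (cjR y)" "cji (rep (a,b) y) = mmul b (cji y)"
  by (simp_all add: rep_def)

lemma rep_hzero[simp]: "rep ab hzero = hzero" by (cases ab) (simp add: rep_def hzero_def)
lemma msc_msc[simp]: "msc a (msc b x) = msc (a*b) x" by (simp add: msc_def fun_eq_iff)
lemma msc_1[simp]: "msc 1 x = x" by (simp add: msc_def fun_eq_iff)

lemma Jop_hzero[simp]: "Jop hzero = hzero" by (simp add: Jop_def hzero_def)

lemma hsub_c[simp]:
  "cij (hsub x y) = madd (cij x) (msc (-1) (cij y))" "ciL (hsub x y) = madd (ciL x) (msc (-1) (ciL y))"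
  "ciR (hsub x y) = madd (ciR x) (msc (-1) (ciR y))" "cjL (hsub x y) = madd (cjL x) (msc (-1) (cjL y))"
  "cjR (hsub x y) = madd (cjR x) (msc (-1) (cjR y))" "cji (hsub x y) = madd (cji x) (msc (-1) (cji y))"
  by (simp_all add: hsub_def hadd_def hscale_def)

lemma hadd_c[simp]:
  "cij (hadd x y) = madd (cij x) (cij y)" "ciL (hadd x y) = madd (ciL x) (ciL y)"
  "ciR (hadd x y) = madd (ciR x) (ciR y)" "cjL (hadd x y) = madd (cjL x) (cjL y)"
  "cjR (hadd x y) = madd (cjR x) (cjR y)" "cji (hadd x y) = madd (cji x) (cji y)"
  by (simp_all add: hadd_def)

lemma hscale_c[simp]:
  "cij (hscale c y) = msc c (cij y)" "ciL (hscale c y) = msc c (ciL y)"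
  "ciR (hscale c y) = msc c (ciR y)" "cjL (hscale c y) = msc c (cjL y)"
  "cjR (hscale c y) = msc c (cjR y)" "cji (hscale c y) = msc c (cji y)"
  by (simp_all add: hscale_def)

lemma hzero_c[simp]:
  "cij hzero = mzero" "ciL hzero = mzero" "ciR hzero = mzero" "cjL hzero = mzero" "cjR hzero = mzero" "cji hzero = mzero"
  by (simp_all add: hzero_def)

lemma E_c[simp]:
  "cij (E1 m) = m" "ciL (E1 m) = mzero" "ciR (E1 m) = mzero" "cjL (E1 m) = mzero" "cjR (E1 m) = mzero" "cji (E1 m) = mzero"
  "cij (E2 n) = mzero" "ciL (E2 n) = n" "ciR (E2 n) = mzero" "cjL (E2 n) = mzero" "cjR (E2 n) = mzero" "cji (E2 n) = mzero"
  "cij (E3 n) = mzero" "ciL (E3 n) = mzero" "ciR (E3 n) = n" "cjL (E3 n) = mzero" "cjR (E3 n) = mzero" "cji (E3 n) = mzero"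
  "cij (E4 k) = mzero" "ciL (E4 k) = mzero" "ciR (E4 k) = mzero" "cjL (E4 k) = k" "cjR (E4 k) = mzero" "cji (E4 k) = mzero"
  "cij (E5 k) = mzero" "ciL (E5 k) = mzero" "ciR (E5 k) = mzero" "cjL (E5 k) = mzero" "cjR (E5 k) = k" "cji (E5 k) = mzero"
  "cij (E6 p) = mzero" "ciL (E6 p) = mzero" "ciR (E6 p) = mzero" "cjL (E6 p) = mzero" "cjR (E6 p) = mzero" "cji (E6 p) = p"
  by (simp_all add: Edefs)

lemma hinner_E:
  "hinner (E1 a) y = hs a (cij y)" "hinner (E2 b) y = hs b (ciL y)" "hinner (E3 b) y = hs b (ciR y)"
  "hinner (E4 c) y = hs c (cjL y)" "hinner (E5 c) y = hs c (cjR y)" "hinner (E6 d) y = hs d (cji y)"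
  "hinner y (E1 a) = hs (cij y) a" "hinner y (E2 b) = hs (ciL y) b" "hinner y (E3 b) = hs (ciR y) b"
  "hinner y (E4 c) = hs (cjL y) c" "hinner y (E5 c) = hs (cjR y) c" "hinner y (E6 d) = hs (cji y) d"
  by (simp_all add: hinner_def)

lemma gam_c[simp]:
  "cij (gam y) = cij y" "ciL (gam y) = ciL y" "ciR (gam y) = msc (-1) (ciR y)"
  "cjL (gam y) = cjL y" "cjR (gam y) = msc (-1) (cjR y)" "cji (gam y) = msc (-1) (cji y)"
  by (simp_all add: gam_def)

lemma Jop_c[simp]:
  "cij (Jop y) = madj (cji y)" "ciL (Jop y) = madj (ciR y)" "ciR (Jop y) = madj (ciL y)"
  "cjL (Jop y) = madj (cjR y)" "cjR (Jop y) = madj (cjL y)" "cji (Jop y) = madj (cij y)"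
  by (simp_all add: Jop_def)

lemma hscale0: "hscale 0 y = hzero"
  by (simp add: hscale_def hzero_def msc_def mzero_def)

lemma hilb_eqI: "cij x = cij y \<Longrightarrow> ciL x = ciL y \<Longrightarrow> ciR x = ciR y \<Longrightarrow> cjL x = cjL y \<Longrightarrow> cjR x = cjR y \<Longrightarrow> cji x = cji y \<Longrightarrow> x = y"
  by (cases x; cases y) auto

lemma hzero_iff: "x = hzero \<longleftrightarrow> cij x = mzero \<and> ciL x = mzero \<and> ciR x = mzero \<and> cjL x = mzero \<and> cjR x = mzero \<and> cji x = mzero"
  by (cases x) (auto simp: hzero_def)

lemma mz: "(m::('a,'b) cmat) = mzero \<longleftrightarrow> (\<forall>r s. m r s = 0)"
  by (auto simp: mzero_def fun_eq_iff)

theorem mainTheorem2: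
  fixes D :: "('i::finite,'j::finite) hilb \<Rightarrow> ('i,'j) hilb"
  assumes "finite_dirac D"
  shows "\<exists>(A :: ('i,'i) cmat \<Rightarrow> ('i,'j) cmat) As
           (B :: ('j,'j) cmat \<Rightarrow> ('i,'j) cmat) Bs
           (Mi :: ('i,'i) cmat \<Rightarrow> ('i,'i) cmat) Mis
           (Mj :: ('j,'j) cmat \<Rightarrow> ('j,'j) cmat) Mjs.
           is_adjoint A As \<and> is_adjoint B Bs \<and> is_adjoint Mi Mis \<and> is_adjoint Mj Mjs \<and>
           (\<forall>x. D x =
              H (madd (A (ciR x)) (B (cjR x)))
                (madd (Mi (ciR x)) (madj (As (madj (cji x)))))
                (madd (As (cij x)) (Mis (ciL x)))
                (madd (Mj (cjR x)) (madj (Bs (madj (cji x)))))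
                (madd (Bs (cij x)) (Mjs (cjL x)))
                (madd (madj (A (madj (ciL x)))) (madj (B (madj (cjL x))))))"
proof -
  have lin_add: "\<And>x y. D (hadd x y) = hadd (D x) (D y)"
   and lin_sc: "\<And>c x. D (hscale c x) = hscale c (D x)"
   and sa: "\<And>x y. hinner (D x) y = hinner x (D y)"
   and gr: "\<And>x. hadd (D (gam x)) (gam (D x)) = hzero"
   and jc: "\<And>x. D (Jop x) = Jop (D x)"
   and fo: "\<And>a b x. comm (comm D (rep a)) (\<lambda>y. Jop (rep b (Jop y))) x = hzero"
    using assms unfolding finite_dirac_def is_linear_op_def by blast+
  have D0: "D hzero = hzero"
    using lin_sc[of 0 hzero] by (simp add: hscale0)
  let ?P = "rep (Idm::('i,'i) cmat, mzero::('j,'j) cmat)"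
  let ?Q = "\<lambda>y. Jop (rep (mzero::('i,'i) cmat, Idm::('j,'j) cmat) (Jop y))"
  note fo' = fo[of "(Idm, mzero)" "(mzero, Idm)", unfolded comm_def]
  have g1: "cij (D (E1 m)) = mzero \<and> ciL (D (E1 m)) = mzero \<and> cjL (D (E1 m)) = mzero" for m
    using gr[of "E1 m", unfolded hzero_iff] by (simp; simp add: madd_def msc_def mzero_def fun_eq_iff)
  have g2: "cij (D (E2 m)) = mzero \<and> ciL (D (E2 m)) = mzero \<and> cjL (D (E2 m)) = mzero" for m
    using gr[of "E2 m", unfolded hzero_iff] by (simp; simp add: madd_def msc_def mzero_def fun_eq_iff)
  have g4: "cij (D (E4 m)) = mzero \<and> ciL (D (E4 m)) = mzero \<and> cjL (D (E4 m)) = mzero" for m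
    using gr[of "E4 m", unfolded hzero_iff] by (simp; simp add: madd_def msc_def mzero_def fun_eq_iff)
  have g3: "ciR (D (E3 m)) = mzero \<and> cjR (D (E3 m)) = mzero \<and> cji (D (E3 m)) = mzero" for m
    using gr[of "E3 m", unfolded hzero_iff] by (simp add: lin_sc; simp add: madd_def msc_def mzero_def fun_eq_iff)
  have g5: "ciR (D (E5 m)) = mzero \<and> cjR (D (E5 m)) = mzero \<and> cji (D (E5 m)) = mzero" for m
    using gr[of "E5 m", unfolded hzero_iff] by (simp add: lin_sc; simp add: madd_def msc_def mzero_def fun_eq_iff)
  have g6: "ciR (D (E6 m)) = mzero \<and> cjR (D (E6 m)) = mzero \<and> cji (D (E6 m)) = mzero" for m
    using gr[of "E6 m", unfolded hzero_iff] by (simp add: lin_sc; simp add: madd_def msc_def mzero_def fun_eq_iff)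
  have f1: "cji (D (E1 m)) = mzero" for m
    using fo'[of "E1 m", unfolded hzero_iff] by (simp add: D0; simp add: madd_def msc_def mzero_def fun_eq_iff)
  have f6: "cij (D (E6 m)) = mzero" for m
    using fo'[of "E6 m", unfolded hzero_iff] by (simp add: D0; simp add: madd_def msc_def mzero_def fun_eq_iff)
  have f5: "ciL (D (E5 m)) = mzero" for m
    using fo'[of "E5 m", unfolded hzero_iff] by (simp add: D0; simp add: madd_def msc_def mzero_def fun_eq_iff)
  have f2: "cjR (D (E2 m)) = mzero" for m
    using fo'[of "E2 m", unfolded hzero_iff] by (simp add: D0; simp add: madd_def msc_def mzero_def fun_eq_iff)
  have f3: "cjL (D (E3 m)) = mzero" for m
    using fo'[of "E3 m", unfolded hzero_iff] by (simp add: D0; simp add: madd_def msc_def mzero_def fun_eq_iff)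
  have f4: "ciR (D (E4 m)) = mzero" for m
    using fo'[of "E4 m", unfolded hzero_iff] by (simp add: D0; simp add: madd_def msc_def mzero_def fun_eq_iff)
  have j1: "ciL (D (E6 p)) = madj (ciR (D (E1 (madj p))))"
       "cjL (D (E6 p)) = madj (cjR (D (E1 (madj p))))" for p
    using jc[of "E1 (madj p)"] by simp_all
  have j2: "cji (D (E2 n)) = madj (cij (D (E3 (madj n))))" for n
    using jc[of "E3 (madj n)"] by simp
  have j3: "cji (D (E4 k)) = madj (cij (D (E5 (madj k))))" for k
    using jc[of "E5 (madj k)"] by simp
  define A where "A = (\<lambda>z. cij (D (E3 z)))"
  define As where "As = (\<lambda>z. ciR (D (E1 z)))"
  define B where "B = (\<lambda>z. cij (D (E5 z)))"
  define Bs where "Bs = (\<lambda>z. cjR (D (E1 z)))"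
  define Mi where "Mi = (\<lambda>z. ciL (D (E3 z)))"
  define Mis where "Mis = (\<lambda>z. ciR (D (E2 z)))"
  define Mj where "Mj = (\<lambda>z. cjL (D (E5 z)))"
  define Mjs where "Mjs = (\<lambda>z. cjR (D (E4 z)))"
  have a1: "is_adjoint A As" unfolding is_adjoint_def A_def As_def
    apply (intro allI)
    subgoal for x y using sa[of "E3 x" "E1 y"] by (simp add: hinner_E)
    done
  have a2: "is_adjoint B Bs" unfolding is_adjoint_def B_def Bs_def
    apply (intro allI)
    subgoal for x y using sa[of "E5 x" "E1 y"] by (simp add: hinner_E)
    done
  have a3: "is_adjoint Mi Mis" unfolding is_adjoint_def Mi_def Mis_def
    apply (intro allI)
    subgoal for x y using sa[of "E3 x" "E2 y"] by (simp add: hinner_E)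
    done
  have a4: "is_adjoint Mj Mjs" unfolding is_adjoint_def Mj_def Mjs_def
    apply (intro allI)
    subgoal for x y using sa[of "E5 x" "E4 y"] by (simp add: hinner_E)
    done
  have Dx: "D x = hadd (D (E1 (cij x))) (hadd (D (E2 (ciL x))) (hadd (D (E3 (ciR x))) (hadd (D (E4 (cjL x))) (hadd (D (E5 (cjR x))) (D (E6 (cji x)))))))" for x
  proof -
    have "D x = D (hadd (E1 (cij x)) (hadd (E2 (ciL x)) (hadd (E3 (ciR x)) (hadd (E4 (cjL x)) (hadd (E5 (cjR x)) (E6 (cji x)))))))"
      by (rule arg_cong[where f=D], rule decomp)
    then show ?thesis by (simp add: lin_add)
  qed
  have main: "D x =
              H (madd (A (ciR x)) (B (cjR x)))
                (madd (Mi (ciR x)) (madj (As (madj (cji x)))))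
                (madd (As (cij x)) (Mis (ciL x)))
                (madd (Mj (cjR x)) (madj (Bs (madj (cji x)))))
                (madd (Bs (cij x)) (Mjs (cjL x)))
                (madd (madj (A (madj (ciL x)))) (madj (B (madj (cjL x)))))" for x
    apply (rule hilb_eqI)
    apply (subst Dx[of x]; simp add: g1 g2 g3 g4 g5 g6 f1 f2 f3 f4 f5 f6 j1 j2 j3; simp add: A_def As_def B_def Bs_def Mi_def Mis_def Mj_def Mjs_def madd_def fun_eq_iff add_ac)+
    done
  show ?thesis using a1 a2 a3 a4 main by blast
qed

end
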